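(* Let $n\ge3$, $\zeta=2\pi/n$, $m\in[0,n/2]\cap\mathbb{N}$ with $m\ne n/4$, $a>0$, $V$ smooth, and $k\in\{1,\dots,n-1\}$. The matrix $iJB_k$ maps the real subspace $\mathbb{R}\times i\mathbb{R}\subset\mathbb{C}^2$ into itself, and as a real-linear map on this subspace its eigenvalues are $\nu_k^{\pm}=\beta_k\pm\sqrt{\alpha_k^2(1-\phi_k(a))}$. Moreover: (a) if $k\in[1,n-1]\cap\mathbb{N}$ and $\phi_k(a)\in(-\infty,\gamma_k)$, then $\nu_k^+$ is positive; (b) if $k\in[1,n/2)\cap\mathbb{N}$ and $\phi_k(a)\in(\gamma_k,1)$, then $\nu_k^+$ and $\nu_k^-$ are positive.
   Context: $J=\begin{pmatrix}0&-1\\1&0\end{pmatrix}$. $\alpha_k=4\cos(m\zeta)\sin^2(k\zeta/2)$ (nonzero for $k=1,\dots,n-1$ under the assumption $m\ne n/4$), $\beta_k=2\sin(m\zeta)\sin(k\zeta)$, $\phi_k(a)=\frac{2a^2}{\alpha_k}V''(a^2)$, $\gamma_k=1-(\beta_k/\alpha_k)^2$, and $B_k=\mathrm{diag}(2a^2V''(a^2)-\alpha_k,-\alpha_k)+iJ\beta_k=\alpha_k\,\mathrm{diag}(\phi_k(a)-1,-1)+\beta_k\, iJ$. *)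

theory Defs
  imports "HOL-Analysis.Analysis"
begin

definition zeta :: "nat \<Rightarrow> real" where
  "zeta n = 2 * pi / real n"

definition alpha_k :: "nat \<Rightarrow> nat \<Rightarrow> nat \<Rightarrow> real" where
  "alpha_k n m k = 4 * cos (real m * zeta n) * (sin (real k * zeta n / 2))^2"

definition beta_k :: "nat \<Rightarrow> nat \<Rightarrow> nat \<Rightarrow> real" where
  "beta_k n m k = 2 * sin (real m * zeta n) * sin (real k * zeta n)"

definition phi_k :: "nat \<Rightarrow> nat \<Rightarrow> (real \<Rightarrow> real) \<Rightarrow> nat \<Rightarrow> real \<Rightarrow> real" where
  "phi_k n m V k a = 2 * a^2 * deriv (deriv V) (a^2) / alpha_k n m k"

definition gamma_k :: "nat \<Rightarrow> nat \<Rightarrow> nat \<Rightarrow> real" where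
  "gamma_k n m k = 1 - (beta_k n m k / alpha_k n m k)^2"

definition Jmat :: "complex^2^2" where
  "Jmat = vector [vector [0, -1], vector [1, 0]]"

definition Bmat :: "nat \<Rightarrow> nat \<Rightarrow> (real \<Rightarrow> real) \<Rightarrow> nat \<Rightarrow> real \<Rightarrow> complex^2^2" where
  "Bmat n m V k a =
     vector [vector [complex_of_real (2 * a^2 * deriv (deriv V) (a^2) - alpha_k n m k), 0],
             vector [0, complex_of_real (- alpha_k n m k)]]
     + (\<chi> i j. \<i> * complex_of_real (beta_k n m k) * Jmat $ i $ j)"

definition iJB :: "nat \<Rightarrow> nat \<Rightarrow> (real \<Rightarrow> real) \<Rightarrow> nat \<Rightarrow> real \<Rightarrow> complex^2^2" where
  "iJB n m V k a = (\<chi> i j. \<i> * Jmat $ i $ j) ** Bmat n m V k a"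

definition embR :: "real^2 \<Rightarrow> complex^2" where
  "embR v = vector [complex_of_real (v $ 1), \<i> * complex_of_real (v $ 2)]"

text \<open>Real-linear map induced on R x iR (in coordinates (x,y) for (x, i y))\<close>
definition restr_map :: "complex^2^2 \<Rightarrow> real^2 \<Rightarrow> real^2" where
  "restr_map M v = (let w = M *v embR v in vector [Re (w $ 1), Im (w $ 2)])"

definition eigenvalues2 :: "real^2^2 \<Rightarrow> complex set" where
  "eigenvalues2 A = {lam. \<exists>v::complex^2. v \<noteq> 0 \<and>
       (\<chi> i j. complex_of_real (A $ i $ j)) *v v = lam *s v}"

definition nu_plus :: "nat \<Rightarrow> nat \<Rightarrow> (real \<Rightarrow> real) \<Rightarrow> nat \<Rightarrow> real \<Rightarrow> complex" where
  "nu_plus n m V k a = complex_of_real (beta_k n m k)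
     + csqrt (complex_of_real ((alpha_k n m k)^2 * (1 - phi_k n m V k a)))"

definition nu_minus :: "nat \<Rightarrow> nat \<Rightarrow> (real \<Rightarrow> real) \<Rightarrow> nat \<Rightarrow> real \<Rightarrow> complex" where
  "nu_minus n m V k a = complex_of_real (beta_k n m k)
     - csqrt (complex_of_real ((alpha_k n m k)^2 * (1 - phi_k n m V k a)))"

end

theory Submission
  imports Defs
begin


lemma iJB_explicit:
  "iJB n m V k a = vector [vector [complex_of_real (beta_k n m k), \<i> * complex_of_real (alpha_k n m k)],
     vector [\<i> * complex_of_real (2 * a^2 * deriv (deriv V) (a^2) - alpha_k n m k), complex_of_real (beta_k n m k)]]"
  unfolding iJB_def Bmat_def Jmat_def
  by (simp add: vec_eq_iff forall_2 matrix_matrix_mult_def sum_2 algebra_simps)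

lemma restr_explicit:
  "restr_map (iJB n m V k a) v = vector [beta_k n m k * v$1 - alpha_k n m k * v$2,
     (2 * a^2 * deriv (deriv V) (a^2) - alpha_k n m k) * v$1 + beta_k n m k * v$2]"
  unfolding restr_map_def iJB_explicit embR_def
  by (simp add: matrix_vector_mult_def sum_2 Let_def)

lemma matrix_explicit:
  "matrix (restr_map (iJB n m V k a)) = vector [vector [beta_k n m k, - alpha_k n m k],
     vector [2 * a^2 * deriv (deriv V) (a^2) - alpha_k n m k, beta_k n m k]]"
  by (simp add: matrix_def restr_explicit vec_eq_iff forall_2 axis_def)

lemma lin: "linear (restr_map (iJB n m V k a))"
  unfolding restr_explicit
  by (rule linearI) (simp_all add: vec_eq_iff forall_2 algebra_simps)



lemma eig_char:
  fixes b al cc :: real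
  assumes "al \<noteq> 0"
  shows "lam \<in> eigenvalues2 (vector [vector [b, - al], vector [cc, b]]) \<longleftrightarrow>
    (lam - of_real b)^2 = of_real (- al * cc)"
proof
  assume "lam \<in> eigenvalues2 (vector [vector [b, - al], vector [cc, b]])"
  then obtain v :: "complex^2" where v: "v \<noteq> 0"
    "(\<chi> i j. complex_of_real ((vector [vector [b, - al], vector [cc, b]] :: real^2^2) $ i $ j)) *v v = lam *s v"
    unfolding eigenvalues2_def by blast
  from v(2) have e1: "of_real b * v$1 - of_real al * v$2 = lam * v$1"
    and e2: "of_real cc * v$1 + of_real b * v$2 = lam * v$2"
    by (auto simp: vec_eq_iff forall_2 matrix_vector_mult_def sum_2)
  define D where "D = (lam - of_real b)^2 - of_real (- al * cc)"
  have E1: "of_real b * v$1 - of_real al * v$2 - lam * v$1 = 0" using e1 by simp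
  have E2: "of_real cc * v$1 + of_real b * v$2 - lam * v$2 = 0" using e2 by simp
  have "D * v$1 = (of_real b - lam) * (of_real b * v$1 - of_real al * v$2 - lam * v$1)
      + of_real al * (of_real cc * v$1 + of_real b * v$2 - lam * v$2)"
    unfolding D_def by (simp add: power2_eq_square algebra_simps)
  hence "D * v$1 = 0" using E1 E2 by simp
  moreover have "- D * v$2 = of_real cc * (of_real b * v$1 - of_real al * v$2 - lam * v$1)
      - (of_real b - lam) * (of_real cc * v$1 + of_real b * v$2 - lam * v$2)"
    unfolding D_def by (simp add: power2_eq_square algebra_simps)
  hence "D * v$2 = 0" using E1 E2 by simp
  moreover have "v$1 \<noteq> 0 \<or> v$2 \<noteq> 0" using v(1) by (auto simp: vec_eq_iff forall_2)
  ultimately have "D = 0" by auto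
  from \<open>D = 0\<close> show "(lam - of_real b)^2 = of_real (- al * cc)" unfolding D_def by (simp only: right_minus_eq)
next
  assume h: "(lam - of_real b)^2 = of_real (- al * cc)"
  define v :: "complex^2" where "v = vector [of_real al, of_real b - lam]"
  have "v \<noteq> 0" using assms by (auto simp: v_def vec_eq_iff forall_2)
  moreover have "(\<chi> i j. complex_of_real ((vector [vector [b, - al], vector [cc, b]] :: real^2^2) $ i $ j)) *v v = lam *s v"
    using h by (simp add: v_def vec_eq_iff forall_2 matrix_vector_mult_def sum_2 power2_eq_square algebra_simps)
  ultimately show "lam \<in> eigenvalues2 (vector [vector [b, - al], vector [cc, b]])"
    unfolding eigenvalues2_def by blast
qed

lemma eig_set:
  fixes b al cc :: real
  assumes "al \<noteq> 0"
  shows "eigenvalues2 (vector [vector [b, - al], vector [cc, b]]) =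
    {of_real b + csqrt (of_real (- al * cc)), of_real b - csqrt (of_real (- al * cc))}"
proof -
  have "(lam - of_real b)^2 = of_real (- al * cc) \<longleftrightarrow>
     lam = of_real b + csqrt (of_real (- al * cc)) \<or> lam = of_real b - csqrt (of_real (- al * cc))" for lam
  proof -
    have "(lam - of_real b)^2 = of_real (- al * cc) \<longleftrightarrow> (lam - of_real b)^2 = (csqrt (of_real (- al * cc)))^2"
      by simp
    also have "\<dots> \<longleftrightarrow> lam - of_real b = csqrt (of_real (- al * cc)) \<or> lam - of_real b = - csqrt (of_real (- al * cc))"
      by (rule power2_eq_iff)
    finally show ?thesis by (auto simp: algebra_simps)
  qed
  thus ?thesis using eig_char[OF assms] by blast
qed



theorem lemma1:
  fixes n m k :: nat and a :: real and V :: "real \<Rightarrow> real"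
  assumes "n \<ge> 3"
    and "real m \<le> real n / 2" and "real m \<noteq> real n / 4"
    and "a > 0"
    and "\<forall>j x. (deriv ^^ j) V differentiable (at x)"
    and "1 \<le> k" and "k \<le> n - 1"
  shows "(\<forall>z::complex^2. Im (z $ 1) = 0 \<and> Re (z $ 2) = 0 \<longrightarrow>
            (let w = iJB n m V k a *v z in Im (w $ 1) = 0 \<and> Re (w $ 2) = 0))
    \<and> linear (restr_map (iJB n m V k a))
    \<and> eigenvalues2 (matrix (restr_map (iJB n m V k a)))
        = {nu_plus n m V k a, nu_minus n m V k a}
    \<and> (phi_k n m V k a < gamma_k n m k \<longrightarrow>
         nu_plus n m V k a \<in> \<real> \<and> 0 < Re (nu_plus n m V k a))
    \<and> (real k < real n / 2 \<and> gamma_k n m k < phi_k n m V k a \<and> phi_k n m V k a < 1 \<longrightarrow>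
         nu_plus n m V k a \<in> \<real> \<and> 0 < Re (nu_plus n m V k a) \<and>
         nu_minus n m V k a \<in> \<real> \<and> 0 < Re (nu_minus n m V k a))"
  
proof -
  define al where "al = alpha_k n m k"
  define be where "be = beta_k n m k"
  define c where "c = 2 * a^2 * deriv (deriv V) (a^2)"
  have npos: "real n > 0" using assms(1) by simp
  have cosnz: "cos (real m * zeta n) \<noteq> 0"
  proof
    assume h: "cos (real m * zeta n) = 0"
    have r0: "0 \<le> real m * zeta n" using npos by (simp add: zeta_def)
    have r1: "real m * zeta n \<le> pi"
    proof -
      have "real m * zeta n = 2 * pi * real m / real n" by (simp add: zeta_def)
      also have "\<dots> \<le> 2 * pi * (real n / 2) / real n"
        using assms(2) npos by (intro divide_right_mono mult_left_mono) auto
      also have "\<dots> = pi" using npos by simp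
      finally show ?thesis .
    qed
    have "real m * zeta n = pi / 2"
      using cos_inj_pi[OF r0 r1, of "pi/2"] h by simp
    hence "real m = real n / 4" using npos by (simp add: zeta_def field_simps)
    thus False using assms(3) by simp
  qed
  have sinnz: "sin (real k * zeta n / 2) \<noteq> 0"
  proof -
    have e: "real k * zeta n / 2 = pi * (real k / real n)" by (simp add: zeta_def)
    have "real k < real n" using assms(1,7) by linarith
    hence "real k / real n < 1" using npos by simp
    moreover have "0 < real k / real n" using assms(6) npos by simp
    ultimately have a1: "0 < pi * (real k / real n)" and a2: "pi * (real k / real n) < pi"
      by (metis mult_pos_pos pi_gt_zero, metis mult.right_neutral mult_strict_left_mono pi_gt_zero)
    from a1 a2 have "sin (pi * (real k / real n)) > 0" by (rule sin_gt_zero)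
    thus ?thesis using e by simp
  qed
  have alnz: "al \<noteq> 0" unfolding al_def alpha_k_def using cosnz sinnz by simp
  have X: "al^2 * (1 - phi_k n m V k a) = - al * (c - al)"
    unfolding phi_k_def al_def[symmetric] c_def[symmetric] using alnz
    by (simp add: field_simps power2_eq_square)
  have np: "nu_plus n m V k a = of_real be + csqrt (of_real (- al * (c - al)))"
    unfolding nu_plus_def al_def[symmetric] be_def[symmetric] X ..
  have nm: "nu_minus n m V k a = of_real be - csqrt (of_real (- al * (c - al)))"
    unfolding nu_minus_def al_def[symmetric] be_def[symmetric] X ..
  have al2: "al^2 > 0" using alnz by simp
  have part1: "\<forall>z::complex^2. Im (z $ 1) = 0 \<and> Re (z $ 2) = 0 \<longrightarrow>
            (let w = iJB n m V k a *v z in Im (w $ 1) = 0 \<and> Re (w $ 2) = 0)"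
    by (simp add: iJB_explicit matrix_vector_mult_def sum_2 Let_def)
  have part3: "eigenvalues2 (matrix (restr_map (iJB n m V k a)))
        = {nu_plus n m V k a, nu_minus n m V k a}"
    unfolding matrix_explicit np nm al_def[symmetric] be_def[symmetric] c_def[symmetric]
    by (rule eig_set[OF alnz])
  have phig: "phi_k n m V k a < gamma_k n m k \<longleftrightarrow> be^2 < - al * (c - al)"
  proof -
    have "phi_k n m V k a < gamma_k n m k \<longleftrightarrow> al^2 * phi_k n m V k a < al^2 * gamma_k n m k"
      using al2 by simp
    also have "al^2 * gamma_k n m k = al^2 - be^2"
      unfolding gamma_k_def al_def[symmetric] be_def[symmetric] using alnz
      by (simp add: field_simps power2_eq_square)
    also have "al^2 * phi_k n m V k a = al^2 - (- al * (c - al))" using X by (simp add: algebra_simps)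
    finally show ?thesis by linarith
  qed
  have phi1: "phi_k n m V k a < 1 \<longleftrightarrow> 0 < - al * (c - al)"
  proof -
    have "phi_k n m V k a < 1 \<longleftrightarrow> 0 < al^2 * (1 - phi_k n m V k a)"
      using al2 by (simp add: zero_less_mult_iff)
    thus ?thesis using X by simp
  qed
  have part4: "phi_k n m V k a < gamma_k n m k \<longrightarrow>
         nu_plus n m V k a \<in> \<real> \<and> 0 < Re (nu_plus n m V k a)"
  proof
    assume "phi_k n m V k a < gamma_k n m k"
    hence h: "be^2 < - al * (c - al)" using phig by simp
    hence nn: "0 \<le> - al * (c - al)" by (smt (verit) zero_le_power2)
    have "\<bar>be\<bar> < sqrt (- al * (c - al))"
      using h real_sqrt_less_mono[OF h] by simp
    thus "nu_plus n m V k a \<in> \<real> \<and> 0 < Re (nu_plus n m V k a)"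
      unfolding np csqrt_of_real[OF nn] by auto
  qed
  have part5: "real k < real n / 2 \<and> gamma_k n m k < phi_k n m V k a \<and> phi_k n m V k a < 1 \<longrightarrow>
         nu_plus n m V k a \<in> \<real> \<and> 0 < Re (nu_plus n m V k a) \<and>
         nu_minus n m V k a \<in> \<real> \<and> 0 < Re (nu_minus n m V k a)"
  proof
    assume H: "real k < real n / 2 \<and> gamma_k n m k < phi_k n m V k a \<and> phi_k n m V k a < 1"
    have h1: "- al * (c - al) < be^2"
    proof -
      have "al^2 * gamma_k n m k < al^2 * phi_k n m V k a" using H al2 by simp
      also have "al^2 * phi_k n m V k a = al^2 - (- al * (c - al))" using X by (simp add: algebra_simps)
      also have "al^2 * gamma_k n m k = al^2 - be^2"
        unfolding gamma_k_def al_def[symmetric] be_def[symmetric] using alnz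
        by (simp add: field_simps power2_eq_square)
      finally show ?thesis by (smt (verit))
    qed
    have h2: "0 < - al * (c - al)" using H phi1 by simp
    have bege: "be \<ge> 0"
    proof -
      have s1: "sin (real m * zeta n) \<ge> 0"
      proof (rule sin_ge_zero)
        show "0 \<le> real m * zeta n" using npos by (simp add: zeta_def)
        have "real m * zeta n = 2 * pi * real m / real n" by (simp add: zeta_def)
        also have "\<dots> \<le> 2 * pi * (real n / 2) / real n"
          using assms(2) npos by (intro divide_right_mono mult_left_mono) auto
        also have "\<dots> = pi" using npos by simp
        finally show "real m * zeta n \<le> pi" .
      qed
      have s2: "sin (real k * zeta n) \<ge> 0"
      proof (rule sin_ge_zero)
        show "0 \<le> real k * zeta n" using npos by (simp add: zeta_def)
        have "real k * zeta n = 2 * pi * real k / real n" by (simp add: zeta_def)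
        also have "\<dots> \<le> 2 * pi * (real n / 2) / real n"
          using H npos by (intro divide_right_mono mult_left_mono) auto
        also have "\<dots> = pi" using npos by simp
        finally show "real k * zeta n \<le> pi" .
      qed
      show ?thesis unfolding be_def beta_k_def using s1 s2 by simp
    qed
    have nn: "0 \<le> - al * (c - al)" using h2 by simp
    have sq: "sqrt (- al * (c - al)) < be"
      using real_sqrt_less_mono[OF h1] bege by simp
    have sq0: "0 < sqrt (- al * (c - al))" using h2 by simp
    show "nu_plus n m V k a \<in> \<real> \<and> 0 < Re (nu_plus n m V k a) \<and>
         nu_minus n m V k a \<in> \<real> \<and> 0 < Re (nu_minus n m V k a)"
      unfolding np nm csqrt_of_real[OF nn] using sq sq0 by (auto simp del: real_sqrt_gt_0_iff)
  qed
  show ?thesis using part1 lin part3 part4 part5 by blast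
qed

end
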